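(* Let $n\ge1$ and let $\mathcal I^G$ be an imaginarity measure of $n$-mode Gaussian states. Define, for every $n$-mode Gaussian channel $\phi$, $$\mathcal I_s^{GC}(\phi):=\sup_{\rho\in\mathcal{RGS}_n}\mathcal I^G(\phi(\rho)).$$ Then $\mathcal I_s^{GC}$ is an imaginarity measure for Gaussian channels, i.e.: (GC1) $\mathcal I_s^{GC}(\phi)\ge0$ for every $n$-mode Gaussian channel $\phi$, with $\mathcal I_s^{GC}(\phi)=0$ if and only if $\phi$ is a real Gaussian channel; and (GC2) $\mathcal I_s^{GC}(\Phi(\phi))\le\mathcal I_s^{GC}(\phi)$ for every $n$-mode real Gaussian superchannel $\Phi$ and every $n$-mode Gaussian channel $\phi$.
   Context: Consider $n$ bosonic modes, $H=H_1\otimes\cdots\otimes H_n$ with Fock bases, and quadrature operators $\hat Q_k=\hat a_k+\hat a_k^\dagger$, $\hat P_k=-i(\hat a_k-\hat a_k^\dagger)$, $R=(\hat Q_1,\hat P_1,\dots,\hat Q_n,\hat P_n)$. A state $\rho$ is Gaussian with displacement vector $\bar{\mathbf d}_0\in\mathbb R^{2n}$ and covariance matrix $\nu$ (real symmetric $2n\times2n$, $\nu+i\Delta_n\ge0$) if $\mathrm{Tr}(\rho\, e^{iR^{\mathrm T}z})=\exp(-\tfrac12 z^{\mathrm T}\nu z+i\bar{\mathbf d}_0^{\mathrm T}z)$ for all $z\in\mathbb R^{2n}$. A Gaussian state is real if all its matrix entries in the $n$-mode Fock basis are real; $\mathcal{RGS}_n$ denotes the set of real $n$-mode Gaussian states.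 Let $\Delta_n=\bigoplus_{k=1}^n\begin{pmatrix}0&1\\-1&0\end{pmatrix}$, $\Sigma_n=\bigoplus_{k=1}^n\mathrm{diag}(1,-1)$. An $n$-mode Gaussian channel $\phi=\phi(T,N,\mathbf d)$ (real $2n\times2n$ $T$, $N=N^{\mathrm T}\ge0$, $\mathbf d\in\mathbb R^{2n}$, $N+i\Delta_n-iT\Delta_nT^{\mathrm T}\ge0$) maps the Gaussian state with $(\bar{\mathbf d}_0,\nu)$ to the Gaussian state with $(T\bar{\mathbf d}_0+\mathbf d,\ T\nu T^{\mathrm T}+N)$. A Gaussian channel is real if it maps real Gaussian states to real Gaussian states; it is known that this holds iff $d_{2k}=0$, $n_{2k-1,2l}=0$ for all $k,l$, and either $t_{2k,2l-1}=t_{2k,2l}=0$ for all $k,l$ or $t_{2k-1,2l}=t_{2k,2l-1}=0$ for all $k,l$. An $n$-mode Gaussian superchannel $\Phi(A,O,Y,\bar{\mathbf d})$ (real $2n\times 2n$ $A,O,Y$, $Y=Y^{\mathrm T}$, $OO^{\mathrm T}=I$, $Y+i\Delta_n-iA\Delta_nA^{\mathrm T}\ge0$, $i\Delta_n-iO\Delta_nO^{\mathrm T}\ge0$, $\bar{\mathbf d}\in\mathbb R^{2n}$) acts by $\Phi(\phi(T,N,\mathbf d))=\phi(AT\Sigma_nO^{\mathrm T}\Sigma_n,\,ANA^{\mathrm T}+Y,\,A\mathbf d+\bar{\mathbf d})$; equivalently $\Phi(\phi)=\phi_2\circ\phi\circ\phi_1$ with $\phi_1=\phi(\Sigma_nO^{\mathrm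 T}\Sigma_n,0,0)$, $\phi_2=\phi(A,Y,\bar{\mathbf d})$. It is real if it maps real Gaussian channels to real Gaussian channels. An imaginarity measure of $n$-mode Gaussian states is a map $\mathcal I^G$ from $n$-mode Gaussian states to $[0,\infty)$ such that $\mathcal I^G(\rho)=0$ iff $\rho$ is real, and $\mathcal I^G(\phi(\rho))\le\mathcal I^G(\rho)$ for all real Gaussian channels $\phi$ and all Gaussian states $\rho$. *)

theory Defs
  imports "HOL-Analysis.Analysis"
begin

text \<open>The n modes are indexed by a finite type 'n (so n = CARD('n) \<ge> 1).
  The 2n quadrature coordinates are indexed by 'n \<times> bool: (k, False) is the
  position quadrature Q_k (paper index 2k-1) and (k, True) is the momentum
  quadrature P_k (paper index 2k).\<close>

type_synonym 'n rvec = "real ^ ('n \<times> bool)"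
type_synonym 'n rmat = "real ^ ('n \<times> bool) ^ ('n \<times> bool)"
type_synonym 'n cmat = "complex ^ ('n \<times> bool) ^ ('n \<times> bool)"

text \<open>A Gaussian state is represented by its (displacement vector, covariance matrix).\<close>
type_synonym 'n gstate = "'n rvec \<times> 'n rmat"
text \<open>A Gaussian channel phi(T, N, d).\<close>
type_synonym 'n gchan = "'n rmat \<times> 'n rmat \<times> 'n rvec"
text \<open>A Gaussian superchannel Phi(A, O, Y, dbar).\<close>
type_synonym 'n gsuper = "'n rmat \<times> 'n rmat \<times> 'n rmat \<times> 'n rvec"

definition Delta :: "'n::finite rmat" where
  "Delta = (\<chi> i j. if fst i = fst j \<and> \<not> snd i \<and> snd j then 1
                   else if fst i = fst j \<and> snd i \<and> \<not> snd j then -1 else 0)"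

definition Sigma :: "'n::finite rmat" where
  "Sigma = (\<chi> i j. if i = j then (if snd i then -1 else 1) else 0)"

definition psd_c :: "complex ^ 'm ^ 'm \<Rightarrow> bool" where
  "psd_c M \<longleftrightarrow> (\<forall>v :: complex ^ 'm.
     Im (\<Sum>i\<in>UNIV. \<Sum>j\<in>UNIV. cnj (v $ i) * M $ i $ j * v $ j) = 0 \<and>
     Re (\<Sum>i\<in>UNIV. \<Sum>j\<in>UNIV. cnj (v $ i) * M $ i $ j * v $ j) \<ge> 0)"

definition psd_r :: "real ^ 'm ^ 'm \<Rightarrow> bool" where
  "psd_r M \<longleftrightarrow> (\<forall>x :: real ^ 'm. x \<bullet> (M *v x) \<ge> 0)"

definition cplx :: "real ^ 'm ^ 'm \<Rightarrow> real ^ 'm ^ 'm \<Rightarrow> complex ^ 'm ^ 'm" where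
  "cplx X Y = (\<chi> i j. Complex (X $ i $ j) (Y $ i $ j))"

definition gaussian_state :: "'n::finite gstate \<Rightarrow> bool" where
  "gaussian_state \<rho> \<longleftrightarrow> (case \<rho> of (d0, \<nu>) \<Rightarrow>
      transpose \<nu> = \<nu> \<and> psd_c (cplx \<nu> Delta))"

text \<open>Real Gaussian state (all Fock-basis matrix entries real), expressed through the
  moments.\<close>
definition real_gstate :: "'n::finite gstate \<Rightarrow> bool" where
  "real_gstate \<rho> \<longleftrightarrow> (case \<rho> of (d0, \<nu>) \<Rightarrow>
      (\<forall>k. d0 $ (k, True) = 0) \<and> (\<forall>k l. \<nu> $ (k, False) $ (l, True) = 0))"

definition gchannel :: "'n::finite gchan \<Rightarrow> bool" where
  "gchannel \<phi> \<longleftrightarrow> (case \<phi> of (T, N, d) \<Rightarrow>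
      transpose N = N \<and> psd_r N \<and>
      psd_c (cplx N (Delta - T ** Delta ** transpose T)))"

definition apply_ch :: "'n::finite gchan \<Rightarrow> 'n gstate \<Rightarrow> 'n gstate" where
  "apply_ch \<phi> \<rho> = (case \<phi> of (T, N, d) \<Rightarrow> case \<rho> of (d0, \<nu>) \<Rightarrow>
      (T *v d0 + d, T ** \<nu> ** transpose T + N))"

definition real_gchannel :: "'n::finite gchan \<Rightarrow> bool" where
  "real_gchannel \<phi> \<longleftrightarrow> gchannel \<phi> \<and>
     (\<forall>\<rho>. gaussian_state \<rho> \<and> real_gstate \<rho> \<longrightarrow> real_gstate (apply_ch \<phi> \<rho>))"

definition gsuperchannel :: "'n::finite gsuper \<Rightarrow> bool" where
  "gsuperchannel \<Phi> \<longleftrightarrow> (case \<Phi> of (A, Or, Y, db) \<Rightarrow>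
      transpose Y = Y \<and> Or ** transpose Or = mat 1 \<and>
      psd_c (cplx Y (Delta - A ** Delta ** transpose A)) \<and>
      psd_c (cplx 0 (Delta - Or ** Delta ** transpose Or)))"

definition apply_super :: "'n::finite gsuper \<Rightarrow> 'n gchan \<Rightarrow> 'n gchan" where
  "apply_super \<Phi> \<phi> = (case \<Phi> of (A, Or, Y, db) \<Rightarrow> case \<phi> of (T, N, d) \<Rightarrow>
      (A ** T ** Sigma ** transpose Or ** Sigma, A ** N ** transpose A + Y, A *v d + db))"

definition real_gsuperchannel :: "'n::finite gsuper \<Rightarrow> bool" where
  "real_gsuperchannel \<Phi> \<longleftrightarrow> gsuperchannel \<Phi> \<and>
     (\<forall>\<phi>. real_gchannel \<phi> \<longrightarrow> real_gchannel (apply_super \<Phi> \<phi>))"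

definition imaginarity_measure :: "('n::finite gstate \<Rightarrow> real) \<Rightarrow> bool" where
  "imaginarity_measure IG \<longleftrightarrow>
     (\<forall>\<rho>. gaussian_state \<rho> \<longrightarrow> IG \<rho> \<ge> 0 \<and> (IG \<rho> = 0 \<longleftrightarrow> real_gstate \<rho>)) \<and>
     (\<forall>\<phi> \<rho>. real_gchannel \<phi> \<and> gaussian_state \<rho> \<longrightarrow> IG (apply_ch \<phi> \<rho>) \<le> IG \<rho>)"

definition IGC_s :: "('n::finite gstate \<Rightarrow> real) \<Rightarrow> 'n gchan \<Rightarrow> ereal" where
  "IGC_s IG \<phi> = (SUP \<rho> \<in> {\<rho>. gaussian_state \<rho> \<and> real_gstate \<rho>}. ereal (IG (apply_ch \<phi> \<rho>)))"

end

theory Submission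
  imports Defs
begin

lemma tr_add: "transpose (X + Y) = transpose X + transpose (Y::'a::semiring_1^'n^'m)"
  by (simp add: transpose_def vec_eq_iff)
lemma tr_sub: "transpose (X - Y) = transpose X - transpose (Y::'a::ring_1^'n^'m)"
  by (simp add: transpose_def vec_eq_iff)
lemma tr_zero[simp]: "transpose (0::'a::semiring_1^'n^'m) = 0"
  by (simp add: transpose_def vec_eq_iff)
lemma mm_zero_r[simp]: "(X::'a::semiring_1^'n^'m) ** (0::'a^'k^'n) = 0"
  by (simp add: matrix_matrix_mult_def vec_eq_iff)
lemma mm_zero_l[simp]: "(0::'a::semiring_1^'n^'m) ** (X::'a^'k^'n) = 0"
  by (simp add: matrix_matrix_mult_def vec_eq_iff)
lemma mm_sub_l: "(X::'a::ring_1^'n^'m) ** (Y - Z) = X ** Y - X ** Z"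
  by (simp add: matrix_matrix_mult_def vec_eq_iff sum_subtractf right_diff_distrib)
lemma mm_sub_r: "((Y::'a::ring_1^'n^'m) - Z) ** X = Y ** X - Z ** X"
  by (simp add: matrix_matrix_mult_def vec_eq_iff sum_subtractf left_diff_distrib)
lemma mv_zero_l[simp]: "(0::'a::semiring_1^'n^'m) *v x = 0"
  by (simp add: matrix_vector_mult_def vec_eq_iff)

lemma sum_bool: "(\<Sum>b\<in>(UNIV::bool set). g b) = g False + g True"
  by (simp add: UNIV_bool)

lemma sum_split: "(\<Sum>i\<in>(UNIV::('n::finite \<times> bool) set). f i) = (\<Sum>k\<in>UNIV. f (k,False) + f (k,True))"
proof -
  have "(\<Sum>i\<in>(UNIV::('n \<times> bool) set). f i) = (\<Sum>i\<in>(UNIV::'n set) \<times> (UNIV::bool set). f i)"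
    by (simp only: UNIV_Times_UNIV)
  also have "\<dots> = (\<Sum>k\<in>UNIV. \<Sum>b\<in>UNIV. f (k,b))"
    by (subst sum.cartesian_product) simp
  also have "\<dots> = (\<Sum>k\<in>UNIV. f (k,False) + f (k,True))"
    by (simp only: sum_bool)
  finally show ?thesis .
qed

lemma trip: "(M ** X ** transpose M') $ a $ b = (\<Sum>i\<in>UNIV. \<Sum>j\<in>UNIV. M$a$i * X$i$j * M'$b$j)"
proof -
  have "(M ** X ** transpose M') $ a $ b = (\<Sum>j\<in>UNIV. (\<Sum>i\<in>UNIV. M$a$i * X$i$j) * M'$b$j)"
    by (simp add: matrix_matrix_mult_def transpose_def)
  also have "\<dots> = (\<Sum>j\<in>UNIV. \<Sum>i\<in>UNIV. M$a$i * X$i$j * M'$b$j)"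
    by (simp add: sum_distrib_right)
  also have "\<dots> = (\<Sum>i\<in>UNIV. \<Sum>j\<in>UNIV. M$a$i * X$i$j * M'$b$j)"
    by (rule sum.swap)
  finally show ?thesis .
qed

lemma cplx_entry: "cplx X Y $ i $ j = of_real (X$i$j) + \<i> * of_real (Y$i$j)"
  by (simp add: cplx_def Complex_eq)

lemma psd_c_add:
  assumes "psd_c (cplx X1 Y1)" "psd_c (cplx X2 Y2)"
  shows "psd_c (cplx (X1 + X2) (Y1 + Y2))"
proof -
  have e: "cplx (X1 + X2) (Y1 + Y2) $ i $ j = cplx X1 Y1 $ i $ j + cplx X2 Y2 $ i $ j" for i j
    by (simp add: cplx_def complex_eq_iff)
  show ?thesis using assms unfolding psd_c_def
    by (simp add: e distrib_left distrib_right sum.distrib)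
qed

lemma psd_c_psd_r: assumes "psd_c (cplx X Y)" shows "psd_r X"
  unfolding psd_r_def
proof
  fix x :: "real^'a"
  have "0 \<le> Re (\<Sum>i\<in>UNIV. \<Sum>j\<in>UNIV. cnj ((vec_lambda (\<lambda>k. complex_of_real (x$k))) $ i) * cplx X Y $ i $ j * (vec_lambda (\<lambda>k. complex_of_real (x$k))) $ j)"
    using assms unfolding psd_c_def by blast
  also have "\<dots> = x \<bullet> (X *v x)"
    by (simp add: Re_sum inner_vec_def matrix_vector_mult_def sum_distrib_left cplx_def mult.assoc)
  finally show "0 \<le> x \<bullet> (X *v x)" .
qed

lemma sum4_perm: "(\<Sum>i\<in>A. \<Sum>j\<in>B. \<Sum>k\<in>C. \<Sum>l\<in>D. f i j k l) = (\<Sum>k\<in>C. \<Sum>l\<in>D. \<Sum>i\<in>A. \<Sum>j\<in>B. (f i j k l :: 'a::comm_monoid_add))"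
proof -
  have "(\<Sum>i\<in>A. \<Sum>j\<in>B. \<Sum>k\<in>C. \<Sum>l\<in>D. f i j k l) = (\<Sum>i\<in>A. \<Sum>k\<in>C. \<Sum>j\<in>B. \<Sum>l\<in>D. f i j k l)"
    by (rule sum.cong[OF refl], rule sum.swap)
  also have "\<dots> = (\<Sum>k\<in>C. \<Sum>i\<in>A. \<Sum>j\<in>B. \<Sum>l\<in>D. f i j k l)" by (rule sum.swap)
  also have "\<dots> = (\<Sum>k\<in>C. \<Sum>i\<in>A. \<Sum>l\<in>D. \<Sum>j\<in>B. f i j k l)"
    by (intro sum.cong[OF refl], rule sum.swap)
  also have "\<dots> = (\<Sum>k\<in>C. \<Sum>l\<in>D. \<Sum>i\<in>A. \<Sum>j\<in>B. f i j k l)"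
    by (rule sum.cong[OF refl], rule sum.swap)
  finally show ?thesis .
qed

definition qf :: "complex^'m^'m \<Rightarrow> complex^'m \<Rightarrow> complex" where
  "qf Z v = (\<Sum>i\<in>UNIV. \<Sum>j\<in>UNIV. cnj (v $ i) * Z $ i $ j * v $ j)"

lemma qf_cong:
  fixes M :: "real^'k^'m" and Z :: "complex^'k^'k"
  shows "qf (\<chi> i j. \<Sum>k\<in>UNIV. \<Sum>l\<in>UNIV. of_real (M$i$k) * Z$k$l * of_real (M$j$l)) v
       = qf Z (\<chi> k. \<Sum>i\<in>UNIV. of_real (M$i$k) * v$i)"
proof -
  have "qf (\<chi> i j. \<Sum>k\<in>UNIV. \<Sum>l\<in>UNIV. of_real (M$i$k) * Z$k$l * of_real (M$j$l)) v
     = (\<Sum>i\<in>UNIV. \<Sum>j\<in>UNIV. \<Sum>k\<in>UNIV. \<Sum>l\<in>UNIV. cnj (v$i) * of_real (M$i$k) * Z$k$l * of_real (M$j$l) * v$j)"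
    by (simp add: qf_def sum_distrib_left sum_distrib_right mult.assoc)
  also have "\<dots> = (\<Sum>k\<in>UNIV. \<Sum>l\<in>UNIV. \<Sum>i\<in>UNIV. \<Sum>j\<in>UNIV. cnj (v$i) * of_real (M$i$k) * Z$k$l * of_real (M$j$l) * v$j)"
    by (rule sum4_perm)
  also have "\<dots> = qf Z (\<chi> k. \<Sum>i\<in>UNIV. of_real (M$i$k) * v$i)"
    by (simp add: qf_def sum_distrib_left sum_distrib_right mult_ac)
  finally show ?thesis .
qed

lemma psd_c_qf: "psd_c Z \<longleftrightarrow> (\<forall>v. Im (qf Z v) = 0 \<and> Re (qf Z v) \<ge> 0)"
  by (simp add: psd_c_def qf_def)

lemma cplx_cong: "cplx (M ** X ** transpose M) (M ** Y ** transpose M)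
   = (\<chi> i j. \<Sum>k\<in>UNIV. \<Sum>l\<in>UNIV. of_real (M$i$k) * cplx X Y $k$l * of_real (M$j$l))"
  by (simp add: vec_eq_iff cplx_entry trip of_real_sum sum_distrib_left sum_distrib_right
     distrib_left distrib_right sum.distrib mult_ac)

lemma psd_c_cong:
  assumes "psd_c (cplx X Y)"
  shows "psd_c (cplx (M ** X ** transpose M) (M ** Y ** transpose M))"
  using assms unfolding psd_c_qf cplx_cong qf_cong by blast

lemma vac_entry: "cplx (mat 1) (Delta::'n::finite rmat) $ (k,b) $ (l,c) =
   (if k = l then (if b = c then 1 else if c then \<i> else - \<i>) else 0)"
  by (auto simp: cplx_def Delta_def mat_def complex_eq_iff)

lemma ifz_l: "(a::'a::mult_zero) * (if P then b else 0) = (if P then a*b else 0)" by simp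
lemma ifz_r: "(if P then b else 0) * (a::'a::mult_zero) = (if P then b*a else 0)" by simp

lemma rowF: "(\<Sum>j\<in>UNIV. cnj (v$(k,False)) * cplx (mat 1) (Delta::'n::finite rmat) $ (k,False) $ j * v$j)
   = cnj (v$(k,False)) * v$(k,False) + \<i> * cnj (v$(k,False)) * v$(k,True)"
  by (simp add: sum_split vac_entry ifz_l ifz_r sum.distrib)

lemma rowT: "(\<Sum>j\<in>UNIV. cnj (v$(k,True)) * cplx (mat 1) (Delta::'n::finite rmat) $ (k,True) $ j * v$j)
   = cnj (v$(k,True)) * v$(k,True) - \<i> * cnj (v$(k,True)) * v$(k,False)"
  by (simp add: sum_split vac_entry ifz_l ifz_r sum.distrib)

lemma cnj_sq: "cnj z * z = of_real ((cmod z)^2)"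
  by (subst complex_norm_square) (rule mult.commute)

lemma psd_vac: "psd_c (cplx (mat 1) (Delta::'n::finite rmat))"
proof -
  have "qf (cplx (mat 1) (Delta::'n::finite rmat)) v =
     (\<Sum>k\<in>UNIV. of_real ((cmod (v$(k,False) + \<i> * v$(k,True)))^2))" for v
  proof -
    have e: "cnj a * a + \<i> * cnj a * b + (cnj b * b - \<i> * cnj b * a) = cnj (a + \<i> * b) * (a + \<i> * b)" for a b
      by (simp add: algebra_simps)
    have "qf (cplx (mat 1) (Delta::'n::finite rmat)) v =
      (\<Sum>k\<in>UNIV. cnj (v$(k,False) + \<i> * v$(k,True)) * (v$(k,False) + \<i> * v$(k,True)))"
      unfolding qf_def sum_split[of "\<lambda>i. \<Sum>j\<in>UNIV. _ i j"] rowF rowT e ..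
    also have "\<dots> = (\<Sum>k\<in>UNIV. of_real ((cmod (v$(k,False) + \<i> * v$(k,True)))^2))"
      by (intro sum.cong refl) (rule cnj_sq)
    finally show ?thesis .
  qed
  then show ?thesis unfolding psd_c_qf
    by (simp add: sum_nonneg del: of_real_power)
qed

definition sg :: "'n \<times> bool \<Rightarrow> real" where "sg i = (if snd i then -1 else 1)"

lemma Sig_l: "((Sigma::'n::finite rmat) ** X) $ i $ j = sg i * X $ i $ j"
  by (simp add: matrix_matrix_mult_def Sigma_def sg_def ifz_r ifz_l split del: if_split)

lemma Sig_r: "(X ** (Sigma::'n::finite rmat)) $ i $ j = X $ i $ j * sg j"
  by (simp add: matrix_matrix_mult_def Sigma_def sg_def ifz_r ifz_l split del: if_split)

lemma tr_Sig: "transpose (Sigma::'n::finite rmat) = Sigma"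
  by (auto simp: transpose_def Sigma_def vec_eq_iff)

lemma SS: "(Sigma::'n::finite rmat) ** Sigma = mat 1"
proof -
  have "((Sigma::'n::finite rmat) ** Sigma) $ i $ j = (mat 1::'n rmat) $ i $ j" for i j
    unfolding Sig_l by (simp add: Sigma_def mat_def sg_def)
  then show ?thesis by (simp add: vec_eq_iff)
qed

lemma SDS: "(Sigma::'n::finite rmat) ** Delta ** Sigma = - Delta"
proof -
  have "((Sigma::'n::finite rmat) ** Delta ** Sigma) $ i $ j = (- Delta::'n rmat) $ i $ j" for i j
    unfolding Sig_l Sig_r by (cases i; cases j) (auto simp: Delta_def sg_def)
  then show ?thesis by (simp add: vec_eq_iff)
qed

lemma S'_entry: "((Sigma::'n::finite rmat) ** transpose Or ** Sigma) $ i $ j = sg i * Or $ j $ i * sg j"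
  by (simp add: Sig_l Sig_r transpose_def)

lemma mm_add_r: "(Y + Z) ** (X::'a::semiring_1^'n^'m) = Y ** X + Z ** X"
  by (simp add: matrix_matrix_mult_def vec_eq_iff sum.distrib distrib_right)
lemma mm_neg_l: "(- X) ** (Y::'a::ring_1^'n^'m) = - (X ** Y)"
  by (simp add: matrix_matrix_mult_def vec_eq_iff sum_negf)
lemma mm_neg_r: "(X::'a::ring_1^'n^'m) ** (- Y) = - (X ** Y)"
  by (simp add: matrix_matrix_mult_def vec_eq_iff sum_negf)

lemma ch_gauss:
  assumes "gchannel \<phi>" "gaussian_state \<rho>"
  shows "gaussian_state (apply_ch \<phi> \<rho>)"
proof -
  obtain T N d where p: "\<phi> = (T,N,d)" by (cases \<phi>) auto
  obtain d0 \<nu> where r: "\<rho> = (d0,\<nu>)" by (cases \<rho>) auto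
  have N: "transpose N = N" "psd_c (cplx N (Delta - T ** Delta ** transpose T))"
    using assms(1) unfolding p gchannel_def by auto
  have nu: "transpose \<nu> = \<nu>" "psd_c (cplx \<nu> Delta)" using assms(2) unfolding r gaussian_state_def by auto
  have "psd_c (cplx (T ** \<nu> ** transpose T + N) (T ** Delta ** transpose T + (Delta - T ** Delta ** transpose T)))"
    by (rule psd_c_add[OF psd_c_cong[OF nu(2)] N(2)])
  then have "psd_c (cplx (T ** \<nu> ** transpose T + N) Delta)" by simp
  moreover have "transpose (T ** \<nu> ** transpose T + N) = T ** \<nu> ** transpose T + N"
    by (simp add: tr_add matrix_transpose_mul N(1) nu(1) matrix_mul_assoc)
  ultimately show ?thesis unfolding p r apply_ch_def gaussian_state_def by simp
qed

lemma vac_gauss: "gaussian_state (x, mat 1 :: 'n::finite rmat)"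
  unfolding gaussian_state_def by (simp add: psd_vac transpose_mat)

lemma mat1_QP: "(mat 1 :: 'n::finite rmat) $ (k,False) $ (l,True) = 0"
  by (simp add: mat_def)

lemma vac_real: "(\<forall>k. x $ (k,True) = 0) \<Longrightarrow> real_gstate (x, mat 1 :: 'n::finite rmat)"
  unfolding real_gstate_def by (simp add: mat1_QP)

lemma super_comp:
  "apply_ch (apply_super (A,Or,Y,db) (T,N,d)) \<rho> =
   apply_ch (A,Y,db) (apply_ch (T,N,d) (apply_ch (Sigma ** transpose Or ** Sigma, 0, 0) \<rho>))"
  by (cases \<rho>) (simp add: apply_ch_def apply_super_def matrix_mul_assoc matrix_transpose_mul
        matrix_vector_mul_assoc matrix_vector_right_distrib matrix_add_ldistrib mm_add_r add.assoc)

lemma OtO: fixes Or :: "real^'m::finite^'m"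
  shows "Or ** transpose Or = mat 1 \<Longrightarrow> transpose Or ** Or = mat 1"
  using matrix_left_right_inverse[of Or "transpose Or"] by simp

lemma phi1_gch:
  assumes "gsuperchannel (A,Or,Y,db)"
  shows "gchannel ((Sigma::'n::finite rmat) ** transpose Or ** Sigma, 0, 0)"
proof -
  have o: "Or ** transpose Or = mat 1" and K: "psd_c (cplx 0 (Delta - Or ** Delta ** transpose Or))"
    using assms unfolding gsuperchannel_def by auto
  have o2: "transpose Or ** Or = mat 1" using OtO[OF o] .
  define M where "M = (Sigma::'n::finite rmat) ** transpose Or"
  have tM: "transpose M = Or ** Sigma" unfolding M_def by (simp add: matrix_transpose_mul tr_Sig)
  have "psd_c (cplx (M ** 0 ** transpose M) (M ** (Delta - Or ** Delta ** transpose Or) ** transpose M))"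
    by (rule psd_c_cong[OF K])
  moreover have "M ** (Delta - Or ** Delta ** transpose Or) ** transpose M
      = Delta - (Sigma ** transpose Or ** Sigma) ** Delta ** transpose (Sigma ** transpose Or ** Sigma)"
  proof -
    have o2': "X ** transpose Or ** Or = X" for X :: "'n rmat"
      by (simp add: matrix_mul_assoc[symmetric] o2)
    have a: "M ** (Or ** Delta ** transpose Or) ** transpose M = Sigma ** Delta ** Sigma"
      unfolding tM unfolding M_def by (simp add: matrix_mul_assoc o2')
    have b: "(Sigma ** transpose Or ** Sigma) ** Delta ** transpose (Sigma ** transpose Or ** Sigma)
        = Sigma ** transpose Or ** (Sigma ** Delta ** Sigma) ** Or ** Sigma"
      by (simp add: matrix_transpose_mul tr_Sig matrix_mul_assoc)
    have c: "M ** Delta ** transpose M = Sigma ** transpose Or ** Delta ** Or ** Sigma"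
      unfolding tM unfolding M_def by (simp add: matrix_mul_assoc)
    show ?thesis
      unfolding mm_sub_l mm_sub_r a b c SDS
      by (simp add: matrix_mul_assoc mm_neg_l mm_neg_r)
  qed
  ultimately show ?thesis unfolding gchannel_def psd_r_def by simp
qed

lemma sum1_zero: "(\<And>l a. f (l,a) = 0) \<Longrightarrow> (\<Sum>i\<in>(UNIV::('n::finite \<times> bool) set). f i) = 0"
proof -
  assume h: "\<And>l a. f (l,a) = 0"
  have "f i = 0" for i using h[of "fst i" "snd i"] by simp
  then show ?thesis by simp
qed

lemma sum2_zero: "(\<And>l a l' b. g (l,a) (l',b) = 0) \<Longrightarrow>
   (\<Sum>i\<in>(UNIV::('n::finite \<times> bool) set). \<Sum>j\<in>(UNIV::('m::finite \<times> bool) set). g i j) = 0"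
proof -
  assume h: "\<And>l a l' b. g (l,a) (l',b) = 0"
  have "g i j = 0" for i j using h[of "fst i" "snd i" "fst j" "snd j"] by simp
  then show ?thesis by simp
qed

definition Dm :: "'n::finite rvec \<Rightarrow> 'n rmat" where "Dm w = (\<chi> i j. w$i * w$j)"

lemma psd_D: "psd_c (cplx (Dm w) 0)"
proof -
  have "qf (cplx (Dm w) 0) v = of_real ((cmod (\<Sum>j\<in>UNIV. of_real (w$j) * v$j))^2)" for v
  proof -
    have "qf (cplx (Dm w) 0) v = (\<Sum>i\<in>UNIV. \<Sum>j\<in>UNIV. cnj (of_real (w$i) * v$i) * (of_real (w$j) * v$j))"
      unfolding qf_def by (intro sum.cong refl) (simp add: cplx_def Dm_def Complex_eq mult_ac)
    also have "\<dots> = cnj (\<Sum>j\<in>UNIV. of_real (w$j) * v$j) * (\<Sum>j\<in>UNIV. of_real (w$j) * v$j)"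
      by (simp only: cnj_sum sum_product)
    also have "\<dots> = of_real ((cmod (\<Sum>j\<in>UNIV. of_real (w$j) * v$j))^2)"
      by (rule cnj_sq)
    finally show ?thesis .
  qed
  then show ?thesis unfolding psd_c_qf by (simp del: of_real_power)
qed

lemma Dm_zero: "Dm 0 = 0" by (simp add: Dm_def vec_eq_iff)

lemma ADA: "(A ** Dm w ** transpose A) $ a $ b = (A *v w) $ a * (A *v w) $ b"
proof -
  have "(A ** Dm w ** transpose A) $ a $ b = (\<Sum>i\<in>UNIV. \<Sum>j\<in>UNIV. (A$a$i * w$i) * (A$b$j * w$j))"
    unfolding trip by (intro sum.cong refl) (simp add: Dm_def)
  also have "\<dots> = (A *v w) $ a * (A *v w) $ b"
    by (simp only: matrix_vector_mult_def vec_lambda_beta sum_product)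
  finally show ?thesis .
qed

lemma test_real:
  assumes w: "\<forall>k. w $ (k,False) = 0" and x: "\<forall>k. x $ (k,True) = 0"
  shows "real_gchannel (0 :: 'n::finite rmat, mat 1 + Dm w, x)"
proof -
  have p: "psd_c (cplx (mat 1 + Dm w) (Delta + 0))" by (rule psd_c_add[OF psd_vac psd_D])
  have t: "transpose (mat 1 + Dm w) = mat 1 + Dm w"
    by (simp add: tr_add transpose_mat) (simp add: transpose_def Dm_def vec_eq_iff mult.commute)
  have g: "gchannel (0 :: 'n::finite rmat, mat 1 + Dm w, x)"
    unfolding gchannel_def using p t psd_c_psd_r[OF p] by simp
  show ?thesis unfolding real_gchannel_def
  proof (intro conjI g allI impI)
    fix \<rho> :: "'n gstate"
    show "real_gstate (apply_ch (0, mat 1 + Dm w, x) \<rho>)"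
      using w x by (cases \<rho>) (simp add: apply_ch_def real_gstate_def mat1_QP Dm_def)
  qed
qed

lemma super_test:
  fixes A :: "'n::finite rmat"
  assumes R: "real_gsuperchannel (A,Or,Y,db)"
    and w: "\<forall>k. w $ (k,False) = 0" and x: "\<forall>k. x $ (k,True) = 0"
  shows "(\<forall>k. (A *v x + db) $ (k,True) = 0) \<and>
         (\<forall>k l. (A ** (mat 1 + Dm w) ** transpose A + Y) $ (k,False) $ (l,True) = 0)"
proof -
  have "real_gchannel (apply_super (A,Or,Y,db) (0 :: 'n::finite rmat, mat 1 + Dm w, x))"
    using R test_real[OF w x] unfolding real_gsuperchannel_def by blast
  moreover have "gaussian_state (0, mat 1::'n rmat) \<and> real_gstate (0, mat 1::'n rmat)"
    by (intro conjI vac_gauss vac_real) simp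
  ultimately have "real_gstate (apply_ch (apply_super (A,Or,Y,db) (0, mat 1 + Dm w, x)) (0, mat 1))"
    unfolding real_gchannel_def by blast
  moreover have "apply_ch (apply_super (A,Or,Y,db) (0, mat 1 + Dm w, x)) (0, mat 1)
     = (A *v x + db, A ** (mat 1 + Dm w) ** transpose A + Y)"
    by (simp add: apply_ch_def apply_super_def)
  ultimately show ?thesis unfolding real_gstate_def by simp
qed

lemma axis_col: "(A *v axis j 1) $ i = A $ i $ j"
  by (simp add: matrix_vector_mult_def axis_def ifz_l)

definition Em :: "'n \<Rightarrow> 'n \<Rightarrow> 'n::finite rmat" where
  "Em l0 l = (\<chi> i j. if i = (l0,True) \<and> j = (l,True) then 1 else 0)"

lemma AEm: "(A ** Em l0 l) $ a $ i = (if i = (l,True) then A $ a $ (l0,True) else 0)"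
  by (cases "i = (l,True)") (simp_all add: matrix_matrix_mult_def Em_def ifz_l)

lemma AEmM: "(A ** Em l0 l ** M) $ a $ b = A $ a $ (l0,True) * M $ (l,True) $ b"
  by (simp add: matrix_matrix_mult_def[of "A ** Em l0 l"] AEm ifz_r)

lemma Em_real: fixes l0 l :: "'n::finite" shows "real_gchannel (Em l0 l, mat 1, 0)"
proof -
  have z: "Em l0 l ** Delta ** transpose (Em l0 l) = 0"
    by (simp add: vec_eq_iff trip, intro allI sum2_zero) (auto simp: Em_def Delta_def)
  have g: "gchannel (Em l0 l, mat 1, 0)"
    unfolding gchannel_def using psd_vac psd_c_psd_r[OF psd_vac] by (simp add: z transpose_mat)
  show ?thesis unfolding real_gchannel_def
  proof (intro conjI g allI impI)
    fix \<rho> :: "'n gstate"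
    assume "gaussian_state \<rho> \<and> real_gstate \<rho>"
    then obtain d0 \<nu> where r: "\<rho> = (d0,\<nu>)" and d0: "\<forall>k. d0 $ (k,True) = 0"
      by (cases \<rho>) (auto simp: real_gstate_def)
    have a: "(Em l0 l *v d0) $ (k,True) = 0" for k
      unfolding matrix_vector_mult_def using d0 by (simp, intro sum1_zero) (auto simp: Em_def)
    have b: "(Em l0 l ** \<nu> ** transpose (Em l0 l)) $ (k,False) $ (k',True) = 0" for k k'
      unfolding trip by (intro sum2_zero) (auto simp: Em_def)
    show "real_gstate (apply_ch (Em l0 l, mat 1, 0) \<rho>)"
      unfolding r apply_ch_def real_gstate_def using a b by (simp add: mat1_QP)
  qed
qed

lemma orth_block:
  fixes Or :: "'n::finite rmat"
  assumes o1: "Or ** transpose Or = mat 1" and o2: "transpose Or ** Or = mat 1"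
    and z: "\<forall>k l. Or $ (k,False) $ (l,True) = 0"
  shows "Or $ (k,True) $ (l,False) = 0"
proof -
  have r: "(\<Sum>i\<in>UNIV. Or$(k',True)$i * Or$(k',True)$i) = 1" for k'
  proof -
    have "(Or ** transpose Or) $ (k',True) $ (k',True) = 1" using o1 by (simp add: mat_def)
    then show ?thesis by (simp add: matrix_matrix_mult_def transpose_def)
  qed
  have c: "(\<Sum>i\<in>UNIV. Or$i$(l',True) * Or$i$(l',True)) = 1" for l'
  proof -
    have "(transpose Or ** Or) $ (l',True) $ (l',True) = 1" using o2 by (simp add: mat_def)
    then show ?thesis by (simp add: matrix_matrix_mult_def transpose_def)
  qed
  have R: "(\<Sum>k'\<in>UNIV. \<Sum>l'\<in>UNIV. Or$(k',True)$(l',False) * Or$(k',True)$(l',False))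
         + (\<Sum>k'\<in>UNIV. \<Sum>l'\<in>UNIV. Or$(k',True)$(l',True) * Or$(k',True)$(l',True)) = of_nat CARD('n)"
    using r unfolding sum_split[of "\<lambda>i. Or$(_,True)$i * Or$(_,True)$i"]
    by (simp add: sum.distrib[symmetric])
  have C: "(\<Sum>l'\<in>UNIV. \<Sum>k'\<in>UNIV. Or$(k',True)$(l',True) * Or$(k',True)$(l',True)) = of_nat CARD('n)"
    using c z unfolding sum_split[of "\<lambda>i. Or$i$(_,True) * Or$i$(_,True)"] by simp
  have S: "(\<Sum>k'\<in>UNIV. \<Sum>l'\<in>UNIV. Or$(k',True)$(l',False) * Or$(k',True)$(l',False)) = 0"
    using R C sum.swap[of "\<lambda>l' k'. Or$(k',True)$(l',True) * Or$(k',True)$(l',True)" UNIV UNIV] by simp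
  have "\<forall>k'\<in>UNIV. (\<Sum>l'\<in>UNIV. Or$(k',True)$(l',False) * Or$(k',True)$(l',False)) = 0"
    using S by (subst (asm) sum_nonneg_eq_0_iff) (auto intro: sum_nonneg)
  then have "\<forall>l'\<in>UNIV. Or$(k,True)$(l',False) * Or$(k,True)$(l',False) = 0"
    by (subst (asm) sum_nonneg_eq_0_iff) auto
  then show ?thesis by simp
qed

lemma phi1_real:
  assumes z1: "\<forall>k l. Or $ (k,False) $ (l,True) = 0" and z2: "\<forall>k l. Or $ (k,True) $ (l,False) = 0"
    and r: "real_gstate \<rho>"
  shows "real_gstate (apply_ch ((Sigma::'n::finite rmat) ** transpose Or ** Sigma, 0, 0) \<rho>)"
proof -
  obtain d0 \<nu> where rr: "\<rho> = (d0,\<nu>)" by (cases \<rho>) auto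
  have d0: "\<forall>k. d0 $ (k,True) = 0" and nu: "\<forall>k l. \<nu> $ (k,False) $ (l,True) = 0"
    using r unfolding rr real_gstate_def by auto
  have a: "((Sigma ** transpose Or ** Sigma) *v d0) $ (k,True) = 0" for k
    unfolding matrix_vector_mult_def
    by (simp, intro sum1_zero) (case_tac a, auto simp: S'_entry d0 z1)
  have b: "((Sigma ** transpose Or ** Sigma) ** \<nu> ** transpose (Sigma ** transpose Or ** Sigma)) $ (k,False) $ (k',True) = 0" for k k'
    unfolding trip by (intro sum2_zero) (case_tac a; case_tac b, auto simp: S'_entry nu z1 z2)
  show ?thesis unfolding rr apply_ch_def real_gstate_def using a b by simp
qed

lemma phi2_real_out:
  assumes zP: "\<forall>k l. A $ (k,True) $ (l,False) = 0"
    and zQ: "(\<forall>k l. A $ (k,True) $ (l,True) = 0) \<or> (\<forall>k l. A $ (k,False) $ (l,True) = 0)"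
    and db: "\<forall>k. db $ (k,True) = 0" and Y: "\<forall>k l. Y $ (k,False) $ (l,True) = 0"
    and r: "(\<forall>k l. A $ (k,True) $ (l,True) = 0) \<or> real_gstate \<sigma>"
  shows "real_gstate (apply_ch (A::'n::finite rmat, Y, db) \<sigma>)"
proof -
  obtain d0 \<nu> where rr: "\<sigma> = (d0,\<nu>)" by (cases \<sigma>) auto
  have a: "(A *v d0) $ (k,True) = 0" for k
  proof (cases "\<forall>k l. A $ (k,True) $ (l,True) = 0")
    case True then show ?thesis unfolding matrix_vector_mult_def
      by (simp, intro sum1_zero) (case_tac a, auto simp: zP)
  next
    case False then have "real_gstate \<sigma>" using r by auto
    then have d0: "\<forall>k. d0 $ (k,True) = 0" unfolding rr real_gstate_def by auto
    show ?thesis unfolding matrix_vector_mult_def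
      by (simp, intro sum1_zero) (case_tac a, auto simp: zP d0)
  qed
  have b: "(A ** \<nu> ** transpose A) $ (k,False) $ (k',True) = 0" for k k'
  proof (cases "\<forall>k l. A $ (k,True) $ (l,True) = 0")
    case True then show ?thesis unfolding trip
      by (intro sum2_zero) (case_tac b, auto simp: zP)
  next
    case False
    then have "real_gstate \<sigma>" using r by auto
    then have nu: "\<forall>k l. \<nu> $ (k,False) $ (l,True) = 0" unfolding rr real_gstate_def by auto
    have zQ': "\<forall>k l. A $ (k,False) $ (l,True) = 0" using zQ False by auto
    show ?thesis unfolding trip
      by (intro sum2_zero) (case_tac a; case_tac b, auto simp: zP zQ' nu)
  qed
  show ?thesis unfolding rr apply_ch_def real_gstate_def using a b db Y by simp
qed

lemma AAt: "(A ** transpose A) $ a $ b = (\<Sum>j\<in>UNIV. A$a$j * A$b$j)"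
  by (simp add: matrix_matrix_mult_def transpose_def)

theorem theorem3:
  fixes IG :: "'n::finite gstate \<Rightarrow> real"
  assumes "imaginarity_measure IG"
  shows "(\<forall>\<phi>. gchannel \<phi> \<longrightarrow>
            IGC_s IG \<phi> \<ge> 0 \<and> (IGC_s IG \<phi> = 0 \<longleftrightarrow> real_gchannel \<phi>)) \<and>
         (\<forall>\<Phi> \<phi>. real_gsuperchannel \<Phi> \<and> gchannel \<phi> \<longrightarrow>
            IGC_s IG (apply_super \<Phi> \<phi>) \<le> IGC_s IG \<phi>)"
proof -
  have IGm: "\<And>\<rho>. gaussian_state \<rho> \<Longrightarrow> IG \<rho> \<ge> 0 \<and> (IG \<rho> = 0 \<longleftrightarrow> real_gstate \<rho>)"
    and mono: "\<And>\<phi> \<rho>. real_gchannel \<phi> \<Longrightarrow> gaussian_state \<rho> \<Longrightarrow> IG (apply_ch \<phi> \<rho>) \<le> IG \<rho>"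
    using assms unfolding imaginarity_measure_def by auto
  define S where "S = {\<rho>::'n gstate. gaussian_state \<rho> \<and> real_gstate \<rho>}"
  have IGC: "IGC_s IG \<phi> = (SUP \<rho>\<in>S. ereal (IG (apply_ch \<phi> \<rho>)))" for \<phi>
    unfolding IGC_s_def S_def ..
  have vac: "(0, mat 1) \<in> S" unfolding S_def by (auto intro: vac_gauss vac_real)
  have P1: "IGC_s IG \<phi> \<ge> 0 \<and> (IGC_s IG \<phi> = 0 \<longleftrightarrow> real_gchannel \<phi>)" if g: "gchannel \<phi>" for \<phi>
  proof -
    have nn: "IG (apply_ch \<phi> \<rho>) \<ge> 0" if "\<rho> \<in> S" for \<rho>
      using IGm ch_gauss[OF g] that unfolding S_def by auto
    have ge: "0 \<le> IGC_s IG \<phi>"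
    proof -
      have "ereal 0 \<le> ereal (IG (apply_ch \<phi> (0, mat 1)))" using nn[OF vac] by simp
      also have "\<dots> \<le> IGC_s IG \<phi>" unfolding IGC by (rule SUP_upper[OF vac])
      finally show ?thesis by (simp add: zero_ereal_def)
    qed
    moreover have "real_gchannel \<phi>" if z: "IGC_s IG \<phi> = 0"
    proof -
      have "real_gstate (apply_ch \<phi> \<rho>)" if "\<rho> \<in> S" for \<rho>
      proof -
        have "ereal (IG (apply_ch \<phi> \<rho>)) \<le> IGC_s IG \<phi>" unfolding IGC using that by (rule SUP_upper)
        then have "IG (apply_ch \<phi> \<rho>) \<le> 0" using z by (simp add: zero_ereal_def)
        then have "IG (apply_ch \<phi> \<rho>) = 0" using nn[OF that] by simp
        then show ?thesis using IGm ch_gauss[OF g] that unfolding S_def by auto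
      qed
      then show ?thesis unfolding real_gchannel_def S_def using g by auto
    qed
    moreover have "IGC_s IG \<phi> = 0" if r: "real_gchannel \<phi>"
    proof -
      have "IG (apply_ch \<phi> \<rho>) = 0" if "\<rho> \<in> S" for \<rho>
      proof -
        from that have g\<rho>: "gaussian_state \<rho>" and "real_gstate \<rho>" by (auto simp: S_def)
        then have "real_gstate (apply_ch \<phi> \<rho>)" using r unfolding real_gchannel_def by blast
        then show ?thesis using IGm[OF ch_gauss[OF g g\<rho>]] by simp
      qed
      then have "IGC_s IG \<phi> \<le> 0" unfolding IGC by (intro SUP_least) (simp add: zero_ereal_def)
      then show ?thesis using ge by simp
    qed
    ultimately show ?thesis by blast
  qed
  have P2: "IGC_s IG (apply_super \<Phi> \<phi>) \<le> IGC_s IG \<phi>"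
    if R: "real_gsuperchannel \<Phi>" and g: "gchannel \<phi>" for \<Phi> \<phi>
  proof -
    obtain A Or Y db where \<Phi>: "\<Phi> = (A,Or,Y,db)" by (cases \<Phi>) auto
    obtain T N d where \<phi>: "\<phi> = (T,N,d)" by (cases \<phi>) auto
    have R': "real_gsuperchannel (A,Or,Y,db)" using R \<Phi> by simp
    then have gs: "gsuperchannel (A,Or,Y,db)" unfolding real_gsuperchannel_def by simp
    have Ysym: "transpose Y = Y" and YK: "psd_c (cplx Y (Delta - A ** Delta ** transpose A))"
      and o1: "Or ** transpose Or = mat 1" using gs unfolding gsuperchannel_def by auto
    have g2: "gchannel (A,Y,db)" unfolding gchannel_def using Ysym YK psd_c_psd_r[OF YK] by simp
    have g1: "gchannel ((Sigma::'n rmat) ** transpose Or ** Sigma, 0, 0)" by (rule phi1_gch[OF gs])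
    have z0: "\<forall>k. (0::'n rvec) $ (k,False) = 0" "\<forall>k. (0::'n rvec) $ (k,True) = 0" by simp_all
    have db: "\<forall>k. db$(k,True) = 0" and AY: "\<forall>k l. (A ** transpose A + Y)$(k,False)$(l,True) = 0"
      using super_test[OF R' z0(1) z0(2)] by (simp_all add: Dm_zero)
    have APQ: "A$(k,True)$(l,False) = 0" for k l
    proof -
      have "\<forall>k'. (axis (l,False) 1 :: 'n rvec) $ (k',True) = 0" by (simp add: axis_def)
      then have "(A *v axis (l,False) 1 + db)$(k,True) = 0" using super_test[OF R' z0(1)] by blast
      then show ?thesis using db by (simp add: axis_col)
    qed
    have rank: "(A *v w)$(k,False) * (A *v w)$(l,True) = 0" if wq: "\<forall>k. w$(k,False) = 0" for w k l
    proof -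
      have "(A ** (mat 1 + Dm w) ** transpose A + Y)$(k,False)$(l,True) = 0"
        using super_test[OF R' wq z0(2)] by blast
      moreover have "A ** (mat 1 + Dm w) ** transpose A = A ** transpose A + A ** Dm w ** transpose A"
        by (simp add: matrix_add_ldistrib mm_add_r)
      ultimately have "(A ** transpose A)$(k,False)$(l,True) + (A *v w)$(k,False) * (A *v w)$(l,True) + Y$(k,False)$(l,True) = 0"
        by (simp add: ADA)
      moreover have "(A ** transpose A)$(k,False)$(l,True) + Y$(k,False)$(l,True) = 0"
        using AY by simp
      ultimately show ?thesis by linarith
    qed
    have key: "ereal (IG (apply_ch (apply_super \<Phi> \<phi>) \<rho>)) \<le> IGC_s IG \<phi>" if \<rho>S: "\<rho> \<in> S" for \<rho>
    proof -
      define \<rho>1 where "\<rho>1 = apply_ch ((Sigma::'n rmat) ** transpose Or ** Sigma, 0, 0) \<rho>"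
      define X where "X = apply_ch \<phi> \<rho>1"
      have eq: "apply_ch (apply_super \<Phi> \<phi>) \<rho> = apply_ch (A,Y,db) X"
        unfolding X_def \<rho>1_def \<Phi> \<phi> by (rule super_comp)
      have g\<rho>1: "gaussian_state \<rho>1" unfolding \<rho>1_def using ch_gauss[OF g1] \<rho>S unfolding S_def by auto
      have gX: "gaussian_state X" unfolding X_def using ch_gauss[OF g g\<rho>1] .
      have gout: "gaussian_state (apply_ch (A,Y,db) X)" using ch_gauss[OF g2 gX] .
      show ?thesis
      proof (cases "\<forall>k l. A$(k,True)$(l,True) = 0")
        case True
        have YQP: "\<forall>k l. Y$(k,False)$(l,True) = 0"
        proof (intro allI)
          fix k l
          have "(A ** transpose A)$(k,False)$(l,True) = 0"
            unfolding AAt by (intro sum1_zero) (case_tac a, auto simp: APQ True)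
          then show "Y$(k,False)$(l,True) = 0" using AY by (metis add_0 vector_add_component)
        qed
        have "real_gstate (apply_ch (A,Y,db) X)"
          by (rule phi2_real_out) (use True APQ db YQP in auto)
        then have "IG (apply_ch (A,Y,db) X) = 0" using IGm[OF gout] by simp
        then have "IG (apply_ch (apply_super \<Phi> \<phi>) \<rho>) = 0" using eq by simp
        then show ?thesis using P1[OF g] by (simp add: zero_ereal_def)
      next
        case False
        then obtain k0 l0 where c0: "A$(k0,True)$(l0,True) \<noteq> 0" by blast
        have AQP: "\<forall>k l. A$(k,False)$(l,True) = 0"
        proof (intro allI)
          fix k l
          have q1: "\<forall>k. (axis (l0,True) 1 :: 'n rvec) $ (k,False) = 0" by (simp add: axis_def)
          have q2: "\<forall>k. (axis (l,True) 1 :: 'n rvec) $ (k,False) = 0" by (simp add: axis_def)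
          have q3: "\<forall>k. (axis (l,True) 1 + axis (l0,True) 1 :: 'n rvec) $ (k,False) = 0" by (simp add: axis_def)
          have e1: "A$(k,False)$(l0,True) * A$(k0,True)$(l0,True) = 0"
            using rank[OF q1, of k k0] by (simp add: axis_col)
          have e2: "A$(k,False)$(l,True) * A$(k0,True)$(l,True) = 0"
            using rank[OF q2, of k k0] by (simp add: axis_col)
          have e3: "(A$(k,False)$(l,True) + A$(k,False)$(l0,True)) * (A$(k0,True)$(l,True) + A$(k0,True)$(l0,True)) = 0"
            using rank[OF q3, of k k0] by (simp add: axis_col matrix_vector_right_distrib)
          have a0: "A$(k,False)$(l0,True) = 0" using e1 c0 by simp
          have "A$(k,False)$(l,True) * A$(k0,True)$(l0,True) = 0"
            using e3 e2 unfolding a0 by (simp add: distrib_left)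
          then show "A$(k,False)$(l,True) = 0" using c0 by simp
        qed
        have OrQP: "\<forall>k l. Or$(k,False)$(l,True) = 0"
        proof (intro allI)
          fix k l
          have rE: "real_gchannel (apply_super (A,Or,Y,db) (Em l0 l, mat 1, 0))"
            using R' Em_real unfolding real_gsuperchannel_def by blast
          have "\<forall>k'. (axis (k,False) 1 :: 'n rvec) $ (k',True) = 0" by (simp add: axis_def)
          then have "gaussian_state (axis (k,False) 1, mat 1 :: 'n rmat) \<and> real_gstate (axis (k,False) 1, mat 1 :: 'n rmat)"
            by (intro conjI vac_gauss vac_real)
          then have "real_gstate (apply_ch (apply_super (A,Or,Y,db) (Em l0 l, mat 1, 0)) (axis (k,False) 1, mat 1))"
            using rE unfolding real_gchannel_def by blast
          then have "((A ** Em l0 l ** Sigma ** transpose Or ** Sigma) *v axis (k,False) 1 + (A *v 0 + db)) $ (k0,True) = 0"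
            unfolding real_gstate_def apply_ch_def apply_super_def by simp
          moreover have "A ** Em l0 l ** Sigma ** transpose Or ** Sigma = A ** Em l0 l ** (Sigma ** transpose Or ** Sigma)"
            by (simp add: matrix_mul_assoc)
          ultimately have "A$(k0,True)$(l0,True) * (sg (l,True) * Or$(k,False)$(l,True) * sg (k,False)) = 0"
            using db by (simp add: axis_col AEmM S'_entry)
          then show "Or$(k,False)$(l,True) = 0" using c0 by (simp add: sg_def)
        qed
        have OrPQ: "\<forall>k l. Or$(k,True)$(l,False) = 0"
          using orth_block[OF o1 OtO[OF o1] OrQP] by blast
        have r1: "real_gstate \<rho>1" unfolding \<rho>1_def
          by (rule phi1_real[OF OrQP OrPQ]) (use \<rho>S in \<open>simp add: S_def\<close>)
        have YQP: "\<forall>k l. Y$(k,False)$(l,True) = 0"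
        proof (intro allI)
          fix k l
          have "(A ** transpose A)$(k,False)$(l,True) = 0"
            unfolding AAt by (intro sum1_zero) (case_tac a, auto simp: APQ AQP)
          then show "Y$(k,False)$(l,True) = 0" using AY by (metis add_0 vector_add_component)
        qed
        have r2: "real_gchannel (A,Y,db)" unfolding real_gchannel_def
        proof (intro conjI g2 allI impI)
          fix \<sigma> :: "'n gstate" assume "gaussian_state \<sigma> \<and> real_gstate \<sigma>"
          then show "real_gstate (apply_ch (A,Y,db) \<sigma>)"
            by (intro phi2_real_out) (use APQ AQP db YQP in auto)
        qed
        have "IG (apply_ch (A,Y,db) X) \<le> IG X" by (rule mono[OF r2 gX])
        moreover have "ereal (IG X) \<le> IGC_s IG \<phi>"
          unfolding IGC X_def by (rule SUP_upper) (use g\<rho>1 r1 in \<open>simp add: S_def\<close>)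
        ultimately show ?thesis using eq by (metis ereal_less_eq(3) order_trans)
      qed
    qed
    show ?thesis unfolding IGC[of "apply_super \<Phi> \<phi>"] by (rule SUP_least) (rule key)
  qed
  show ?thesis using P1 P2 by blast
qed

end
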